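(* Let $d\ge2$ and let $k$ be a positive integer. For each $x\in[0,1)$ fix the binary expansion $x=\sum_{j\ge1}a_j^x2^{-j}$ that does not end in infinitely many $1$'s, and for $x=1$ use $a_j^1=1$ for all $j$. Define $\phi(x)=\sum_{j\ge1}2a_j^x3^{-d(j-1)}$ and $\Phi(x_1,\ldots,x_d)=\sum_{p=1}^d3^{-p}\phi(x_p)$; $\Phi$ is injective on $[0,1]^d$. For $\ell\in\{0,\ldots,2^k-2\}$ let $I_\ell=[\ell2^{-k},(\ell+1)2^{-k})$ and let $I_{2^k-1}=[1-2^{-k},1]$. Suppose $f:[0,1]^d\to\mathbb{R}$ is constant on each of the $2^{kd}$ sets $I_{\ell_1}\times\cdots\times I_{\ell_d}$, $\ell_1,\ldots,\ell_d\in\{0,\ldots,2^k-1\}$. Then $g:=f\circ\Phi^{-1}:\Phi([0,1]^d)\to\mathbb{R}$ is Lipschitz with $$|g(x)-g(y)|\le 2\|f\|_\infty3^{kd}|x-y|\qquad\text{for all }x,y\in\Phi([0,1]^d),$$ where $\|f\|_\infty=\sup_{\mathbf x\in[0,1]^d}|f(\mathbf x)|$. *)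

theory Defs
  imports Complex_Main
begin

text \<open>Points of [0,1]^d are functions nat => real, coordinates indexed by 1..d,
  and set to 0 outside {1..d} (extensional representation).\<close>

definition unit_cube :: "nat \<Rightarrow> (nat \<Rightarrow> real) set" where
  "unit_cube d = {x. (\<forall>p\<in>{1..d}. 0 \<le> x p \<and> x p \<le> 1) \<and> (\<forall>p. p \<notin> {1..d} \<longrightarrow> x p = 0)}"

text \<open>j-th binary digit (j >= 1) of x: for x in [0,1) the expansion not ending in
  infinitely many 1's; for x = 1 all digits are 1.\<close>

definition bin_digit :: "real \<Rightarrow> nat \<Rightarrow> real" where
  "bin_digit x j = (if x = 1 then 1 else of_int (\<lfloor>x * 2 ^ j\<rfloor> mod 2))"

definition phi :: "nat \<Rightarrow> real \<Rightarrow> real" where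
  "phi d x = (\<Sum>j. 2 * bin_digit x (j + 1) / 3 ^ (d * j))"

definition Phi :: "nat \<Rightarrow> (nat \<Rightarrow> real) \<Rightarrow> real" where
  "Phi d x = (\<Sum>p = 1..d. phi d (x p) / 3 ^ p)"

definition dyad_int :: "nat \<Rightarrow> nat \<Rightarrow> real set" where
  "dyad_int k l = (if l < 2 ^ k - 1 then {real l / 2 ^ k ..< (real l + 1) / 2 ^ k}
                   else {1 - 1 / 2 ^ k .. 1})"

definition sup_norm :: "nat \<Rightarrow> ((nat \<Rightarrow> real) \<Rightarrow> real) \<Rightarrow> real" where
  "sup_norm d f = Sup ((\<lambda>x. \<bar>f x\<bar>) ` unit_cube d)"

end

theory Submission
  imports Defs "HOL-Library.FuncSet"
begin


definition bd :: "real \<Rightarrow> nat \<Rightarrow> int" where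
  "bd x j = (if x = 1 then 1 else \<lfloor>x * 2 ^ j\<rfloor> mod 2)"

lemma bin_digit_bd: "bin_digit x j = of_int (bd x j)"
  by (simp add: bin_digit_def bd_def)

lemma bd_01: "bd x j = 0 \<or> bd x j = 1"
  unfolding bd_def by auto

fun T :: "real \<Rightarrow> nat \<Rightarrow> int" where
  "T x 0 = 0" | "T x (Suc k) = 2 * T x k + bd x (Suc k)"

lemma floor_double: "\<lfloor>2 * y\<rfloor> = 2 * \<lfloor>y::real\<rfloor> + \<lfloor>2 * y\<rfloor> mod 2"
proof -
  have a: "2 * \<lfloor>y\<rfloor> \<le> \<lfloor>2 * y\<rfloor>"
    by (simp add: le_floor_iff)
  have b: "\<lfloor>2 * y\<rfloor> \<le> 2 * \<lfloor>y\<rfloor> + 1"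
  proof -
    have "2 * y < 2 * \<lfloor>y\<rfloor> + 2" by linarith
    then show ?thesis by linarith
  qed
  from a b show ?thesis by presburger
qed

lemma T_floor: "0 \<le> x \<Longrightarrow> x < 1 \<Longrightarrow> T x k = \<lfloor>x * 2 ^ k\<rfloor>"
proof (induction k)
  case 0 then show ?case by (simp add: floor_eq_iff)
next
  case (Suc k)
  have "\<lfloor>x * 2 ^ Suc k\<rfloor> = \<lfloor>2 * (x * 2 ^ k)\<rfloor>" by (simp add: ac_simps)
  also have "\<dots> = 2 * \<lfloor>x * 2 ^ k\<rfloor> + \<lfloor>2 * (x * 2 ^ k)\<rfloor> mod 2" by (rule floor_double)
  finally show ?case using Suc by (simp add: bd_def ac_simps)
qed

lemma T_one: "T 1 k = 2 ^ k - 1"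
  by (induction k) (simp_all add: bd_def)

lemma T_dyad:
  assumes "0 \<le> x" "x \<le> 1"
  shows "0 \<le> T x k \<and> T x k < 2 ^ k \<and> x \<in> dyad_int k (nat (T x k))"
proof (cases "x = 1")
  case True
  have "(2::nat) ^ k \<ge> 1" by simp
  have e: "int (2 ^ k - 1) = 2 ^ k - 1" using \<open>(2::nat) ^ k \<ge> 1\<close> by (simp add: of_nat_diff)
  have "T x k = int (2 ^ k - 1)" using True T_one[of k] e by simp
  then have "nat (T x k) = 2 ^ k - 1" by (simp only: nat_int)
  then show ?thesis using True T_one[of k] by (simp add: dyad_int_def)
next
  case False
  then have x1: "x < 1" using assms by simp
  define l where "l = \<lfloor>x * 2 ^ k\<rfloor>"
  have T: "T x k = l" using T_floor[OF assms(1) x1] l_def by simp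
  have l0: "0 \<le> l" unfolding l_def using assms by simp
  have lx: "real_of_int l \<le> x * 2 ^ k" "x * 2 ^ k < real_of_int l + 1" unfolding l_def by linarith+
  have "x * 2 ^ k < 2 ^ k" using x1 by simp
  then have lk: "l < 2 ^ k" using lx by (metis floor_less_iff floor_of_int l_def of_int_numeral of_int_power)
  have rl: "real (nat l) = real_of_int l" using l0 by simp
  show ?thesis
  proof (cases "nat l < 2 ^ k - 1")
    case True
    have "real (nat l) / 2 ^ k \<le> x" using lx rl by (simp add: field_simps)
    moreover have "x < (real (nat l) + 1) / 2 ^ k" using lx rl by (simp add: field_simps)
    ultimately show ?thesis using True T l0 lk by (simp add: dyad_int_def)
  next
    case False
    then have "l = 2 ^ k - 1" using lk l0
    proof -
      have "int (nat l) \<ge> int (2 ^ k - 1)" using False by linarith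
      moreover have "int (2 ^ k - 1) = 2 ^ k - 1" by (simp add: of_nat_diff)
      ultimately show ?thesis using lk l0 by simp
    qed
    then have "real_of_int l = 2 ^ k - 1" by simp
    then have "1 - 1 / 2 ^ k \<le> x" using lx by (simp add: field_simps)
    then show ?thesis using False T l0 lk x1 by (simp add: dyad_int_def)
  qed
qed

lemma T_diff: "T x k \<noteq> T y k \<Longrightarrow> \<exists>j\<in>{1..k}. bd x j \<noteq> bd y j"
proof (induction k)
  case 0 then show ?case by simp
next
  case (Suc k)
  show ?case
  proof (cases "T x k = T y k")
    case True
    then have "bd x (Suc k) \<noteq> bd y (Suc k)" using Suc.prems by simp
    then show ?thesis by force
  next
    case False
    then obtain j where "j \<in> {1..k}" "bd x j \<noteq> bd y j" using Suc.IH by blast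
    then show ?thesis by force
  qed
qed

lemma arch_eq: assumes "\<forall>k::nat. \<bar>x - y\<bar> * 2 ^ k \<le> (1::real)" shows "x = y"
proof (rule ccontr)
  assume "x \<noteq> y"
  then have p: "\<bar>x - y\<bar> > 0" by simp
  obtain k where "2 / \<bar>x - y\<bar> < (2::real) ^ k" using real_arch_pow[of 2 "2 / \<bar>x - y\<bar>"] by auto
  then have "2 < \<bar>x - y\<bar> * 2 ^ k" using p by (simp add: field_simps)
  moreover have "\<bar>x - y\<bar> * 2 ^ k \<le> 1" using assms by blast
  ultimately show False by linarith
qed

lemma T_inj:
  assumes "0 \<le> x" "x \<le> 1" "0 \<le> y" "y \<le> 1" "\<forall>k. T x k = T y k"
  shows "x = y"
proof -
  have key: "\<bar>a - b\<bar> * 2 ^ k \<le> 1" if "0 \<le> a" "a < 1" "0 \<le> b" "b \<le> 1" "\<forall>k. T a k = T b k" for a b :: real and k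
  proof (cases "b = 1")
    case True
    have "\<lfloor>a * 2 ^ k\<rfloor> = 2 ^ k - 1" using that T_floor[of a k] T_one[of k] True by simp
    then have "a * 2 ^ k \<ge> 2 ^ k - 1" by (metis of_int_floor_le of_int_1 of_int_diff of_int_numeral of_int_power)
    moreover have "\<bar>a - b\<bar> * 2 ^ k = 2 ^ k - a * 2 ^ k" using True that by (simp add: algebra_simps)
    ultimately show ?thesis by simp
  next
    case False
    then have "\<lfloor>a * 2 ^ k\<rfloor> = \<lfloor>b * 2 ^ k\<rfloor>" using that T_floor by (metis order_less_le)
    then have "\<bar>a * 2 ^ k - b * 2 ^ k\<bar> < 1" by linarith
    moreover have "\<bar>a - b\<bar> * 2 ^ k = \<bar>a * 2 ^ k - b * 2 ^ k\<bar>" by (simp only: left_diff_distrib[symmetric] abs_mult) simp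
    ultimately show ?thesis by simp
  qed
  show ?thesis
  proof (rule arch_eq, intro allI)
    fix k
    show "\<bar>x - y\<bar> * 2 ^ k \<le> 1"
    proof (cases "x = 1")
      case True
      show ?thesis
      proof (cases "y = 1")
        case True then show ?thesis using \<open>x = 1\<close> by simp
      next
        case False
        have "\<bar>y - x\<bar> * 2 ^ k \<le> 1" using key[of y x k] False assms by simp
        then show ?thesis by (simp add: abs_minus_commute)
      qed
    next
      case False
      then show ?thesis using key[of x y k] assms by simp
    qed
  qed
qed



definition ter :: "nat \<Rightarrow> (nat \<Rightarrow> real) \<Rightarrow> nat \<Rightarrow> real" where
  "ter d x n = 2 * bin_digit (x (n mod d + 1)) (n div d + 1)"

lemma bin_digit_01: "bin_digit x j = 0 \<or> bin_digit x j = 1"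
  using bd_01[of x j] by (auto simp: bin_digit_bd)

lemma ter_bounds: "0 \<le> ter d x n \<and> ter d x n \<le> 2"
  using bin_digit_01[of "x (n mod d + 1)" "n div d + 1"] unfolding ter_def by auto

lemma summable_geo_bound:
  fixes a :: "nat \<Rightarrow> real"
  assumes "\<And>n. \<bar>a n\<bar> \<le> 2" 
  shows "summable (\<lambda>n. a n / 3 ^ (n + 1))"
proof (rule summable_comparison_test'[where N=0])
  show "summable (\<lambda>n. 2 * (1/3::real) ^ n)" by (simp add: summable_geometric)
  fix n :: nat
  have "\<bar>a n\<bar> / 3 ^ (n+1) \<le> 2 / 3 ^ (n+1)" using assms by (simp add: divide_right_mono)
  also have "\<dots> \<le> 2 * (1/3) ^ n" by (simp add: power_one_over field_simps)
  finally show "norm (a n / 3 ^ (n + 1)) \<le> 2 * (1/3) ^ n" by (simp add: abs_divide)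
qed

lemma sep_bound:
  fixes e :: "nat \<Rightarrow> real"
  assumes b: "\<And>n. \<bar>e n\<bar> \<le> 2" and z: "\<And>n. n < m \<Longrightarrow> e n = 0" and em: "\<bar>e m\<bar> = 2"
  shows "1 / 3 ^ (m + 1) \<le> \<bar>\<Sum>n. e n / 3 ^ (n + 1)\<bar>"
proof -
  let ?h = "\<lambda>n. e n / 3 ^ (n + 1)"
  have sh: "summable ?h" using summable_geo_bound[OF b] .
  have split: "(\<Sum>n. ?h n) = (\<Sum>n. ?h (n + Suc m)) + (\<Sum>n<Suc m. ?h n)"
    using suminf_split_initial_segment[OF sh, of "Suc m"] .
  have init: "(\<Sum>n<Suc m. ?h n) = ?h m" using z by simp
  have st: "summable (\<lambda>n. ?h (n + Suc m))" using summable_ignore_initial_segment[OF sh] .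
  let ?g = "\<lambda>n. (2 / 3 ^ (m + 2)) * (1/3::real) ^ n"
  have sg: "summable ?g" by (simp add: summable_geometric)
  have gsum: "(\<Sum>n. ?g n) = 1 / 3 ^ (m + 1)"
  proof -
    have "(\<Sum>n. ?g n) = (2 / 3 ^ (m + 2)) * (\<Sum>n. (1/3::real) ^ n)"
      by (rule suminf_mult) (simp add: summable_geometric)
    also have "(\<Sum>n. (1/3::real) ^ n) = 3/2" by (simp add: suminf_geometric)
    finally show ?thesis by simp
  qed
  have gb: "\<bar>?h (n + Suc m)\<bar> \<le> ?g n" for n
  proof -
    have "\<bar>?h (n + Suc m)\<bar> \<le> 2 / 3 ^ (n + Suc m + 1)" using b[of "n + Suc m"] by (simp add: abs_divide divide_right_mono)
    also have "\<dots> = ?g n" by (simp add: power_add power_one_over field_simps)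
    finally show ?thesis .
  qed
  have up: "(\<Sum>n. ?h (n + Suc m)) \<le> 1 / 3 ^ (m + 1)"
  proof -
    have "(\<Sum>n. ?h (n + Suc m)) \<le> (\<Sum>n. ?g n)"
      by (rule suminf_le[OF _ st sg]) (use gb abs_le_D1 in blast)
    then show ?thesis using gsum by simp
  qed
  have lo: "- (1 / 3 ^ (m + 1)) \<le> (\<Sum>n. ?h (n + Suc m))"
  proof -
    have "(\<Sum>n. - ?g n) \<le> (\<Sum>n. ?h (n + Suc m))"
    proof (rule suminf_le[OF _ summable_minus[OF sg] st])
      fix n show "- ?g n \<le> ?h (n + Suc m)" using gb[of n] by linarith
    qed
    then show ?thesis using gsum suminf_minus[OF sg] by simp
  qed
  have "\<bar>?h m\<bar> = 2 / 3 ^ (m + 1)" using em by (simp add: abs_divide)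
  moreover have "(\<Sum>n. ?h n) = ?h m + (\<Sum>n. ?h (n + Suc m))" using split init by simp
  moreover have "0 < 1 / (3::real) ^ (m + 1)" by simp
  moreover have "2 / (3::real) ^ (m + 1) = 2 * (1 / 3 ^ (m + 1))" by simp
  ultimately show ?thesis using up lo by linarith
qed



lemma ter_abs: "\<bar>ter d x n\<bar> \<le> 2" using ter_bounds[of d x n] by simp

lemma Phi_series:
  assumes d: "d > 0"
  shows "Phi d x = (\<Sum>n. ter d x n / 3 ^ (n + 1))"
proof -
  define g where "g n = ter d x n / 3 ^ (n + 1)" for n
  define a where "a p j = 2 * bin_digit (x (Suc p)) (j + 1)" for p j
  have ab: "\<bar>a p j\<bar> \<le> 2" for p j using bin_digit_01[of "x (Suc p)" "j+1"] by (auto simp: a_def)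
  have sg: "summable g" unfolding g_def using summable_geo_bound[of "ter d x", OF ter_abs] .
  have grp: "(\<lambda>j. \<Sum>n\<in>{j*d..<j*d+d}. g n) sums (\<Sum>n. g n)"
    using sums_group[OF summable_sums[OF sg] d] .
  have eqj: "(\<Sum>n\<in>{j*d..<j*d+d}. g n) = (\<Sum>p<d. a p j / 3 ^ (d * j) / 3 ^ Suc p)" for j
  proof -
    have "(\<Sum>n\<in>{j*d..<j*d+d}. g n) = (\<Sum>n\<in>{0+j*d..<d+j*d}. g n)" by (simp add: add.commute)
    also have "\<dots> = (\<Sum>p\<in>{0..<d}. g (p + j*d))" by (rule sum.shift_bounds_nat_ivl)
    also have "\<dots> = (\<Sum>p<d. a p j / 3 ^ (d * j) / 3 ^ Suc p)"
    proof (rule sum.cong)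
      fix p assume "p \<in> {..<d}"
      then have p: "p < d" by simp
      have m: "(p + j * d) mod d = p" using p by simp
      have q: "(p + j * d) div d = j" using p by simp
      show "g (p + j*d) = a p j / 3 ^ (d * j) / 3 ^ Suc p"
      proof -
        have "(3::real) ^ (p + j * d + 1) = 3 ^ (d * j) * 3 ^ Suc p"
          by (simp add: power_add mult.commute)
        then show ?thesis unfolding g_def ter_def a_def m q by simp
      qed
    qed auto
    finally show ?thesis .
  qed
  have sa: "summable (\<lambda>j. a p j / 3 ^ (d * j))" for p
  proof (rule summable_comparison_test'[where N=0])
    show "summable (\<lambda>j. 2 * (1/3::real) ^ j)" by (simp add: summable_geometric)
    fix j :: nat
    have "(3::real) ^ j \<le> 3 ^ (d * j)" using d by (intro power_increasing) auto
    then have "\<bar>a p j\<bar> / 3 ^ (d * j) \<le> 2 / 3 ^ j" using ab[of p j]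
      by (intro frac_le) (use ab in auto)
    then show "norm (a p j / 3 ^ (d * j)) \<le> 2 * (1/3) ^ j" by (simp add: abs_divide power_one_over)
  qed
  have "Phi d x = (\<Sum>p<d. phi d (x (Suc p)) / 3 ^ Suc p)"
    unfolding Phi_def by (simp add: sum.atLeast1_atMost_eq)
  also have "\<dots> = (\<Sum>p<d. \<Sum>j. a p j / 3 ^ (d * j) / 3 ^ Suc p)"
  proof (rule sum.cong[OF refl])
    fix p
    have "phi d (x (Suc p)) = (\<Sum>j. a p j / 3 ^ (d * j))" by (simp add: phi_def a_def)
    then show "phi d (x (Suc p)) / 3 ^ Suc p = (\<Sum>j. a p j / 3 ^ (d * j) / 3 ^ Suc p)"
      using suminf_divide[OF sa[of p], of "3 ^ Suc p"] by simp
  qed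
  also have "\<dots> = (\<Sum>j. \<Sum>p<d. a p j / 3 ^ (d * j) / 3 ^ Suc p)"
    by (rule suminf_sum[symmetric]) (intro summable_divide sa)
  also have "\<dots> = (\<Sum>n. g n)"
  proof -
    have "(\<lambda>j. \<Sum>p<d. a p j / 3 ^ (d * j) / 3 ^ Suc p) sums (\<Sum>n. g n)"
      using grp unfolding eqj .
    then show ?thesis by (rule sums_unique[symmetric])
  qed
  finally show ?thesis unfolding g_def .
qed

lemma Phi_sep:
  assumes d: "d > 0" and ne: "ter d x n \<noteq> ter d y n"
  shows "1 / 3 ^ (n + 1) \<le> \<bar>Phi d x - Phi d y\<bar>"
proof -
  define e where "e k = ter d x k - ter d y k" for k
  have eb: "\<bar>e k\<bar> \<le> 2" for k using ter_bounds[of d x k] ter_bounds[of d y k] by (auto simp: e_def)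
  have e02: "e k = 0 \<or> \<bar>e k\<bar> = 2" for k
    using bin_digit_01[of "x (k mod d + 1)" "k div d + 1"] bin_digit_01[of "y (k mod d + 1)" "k div d + 1"]
    by (auto simp: e_def ter_def)
  define m where "m = (LEAST k. e k \<noteq> 0)"
  have en: "e n \<noteq> 0" using ne by (simp add: e_def)
  have em: "e m \<noteq> 0" unfolding m_def by (rule LeastI[of _ n]) (rule en)
  have mn: "m \<le> n" unfolding m_def by (rule Least_le) (rule en)
  have z: "e k = 0" if "k < m" for k using not_less_Least[of k "\<lambda>k. e k \<noteq> 0"] that m_def by blast
  have "Phi d x - Phi d y = (\<Sum>k. ter d x k / 3 ^ (k + 1)) - (\<Sum>k. ter d y k / 3 ^ (k + 1))"
    using Phi_series[OF d] by simp
  also have "\<dots> = (\<Sum>k. e k / 3 ^ (k + 1))"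
    unfolding e_def diff_divide_distrib
    by (rule suminf_diff; rule summable_geo_bound; rule ter_abs)
  finally have eq: "Phi d x - Phi d y = (\<Sum>k. e k / 3 ^ (k + 1))" .
  have "1 / 3 ^ (m + 1) \<le> \<bar>Phi d x - Phi d y\<bar>"
    unfolding eq by (rule sep_bound[OF eb]) (use z em e02 in auto)
  moreover have "1 / (3::real) ^ (n + 1) \<le> 1 / 3 ^ (m + 1)"
    using mn by (intro divide_left_mono power_increasing) auto
  ultimately show ?thesis by linarith
qed



lemma digit_sep:
  assumes d: "d > 0" and p: "p \<in> {1..d}" and j: "j \<ge> 1" and ne: "bd (x p) j \<noteq> bd (y p) j"
  shows "1 / 3 ^ (d * (j - 1) + p) \<le> \<bar>Phi d x - Phi d y\<bar>"
proof -
  define n where "n = d * (j - 1) + (p - 1)"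
  have pm: "p - 1 < d" using p by auto
  have m: "n mod d = p - 1" unfolding n_def using pm by simp
  have q: "n div d = j - 1" unfolding n_def using pm by simp
  have tx: "ter d z n = 2 * bin_digit (z p) j" for z
    unfolding ter_def m q using p j by simp
  have "ter d x n \<noteq> ter d y n" unfolding tx bin_digit_bd using ne by simp
  from Phi_sep[OF d this] have r: "1 / 3 ^ (n + 1) \<le> \<bar>Phi d x - Phi d y\<bar>" .
  have e: "n + 1 = d * (j - 1) + p" unfolding n_def using p by auto
  show ?thesis using r unfolding e .
qed

theorem lemma3:
  fixes d k :: nat and f :: "(nat \<Rightarrow> real) \<Rightarrow> real"
  assumes "d \<ge> 2" and "k \<ge> 1"
    and const: "\<forall>l :: nat \<Rightarrow> nat. (\<forall>p\<in>{1..d}. l p < 2 ^ k) \<longrightarrow>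
       (\<exists>c. \<forall>x\<in>unit_cube d. (\<forall>p\<in>{1..d}. x p \<in> dyad_int k (l p)) \<longrightarrow> f x = c)"
  shows "inj_on (Phi d) (unit_cube d) \<and>
    (\<forall>u\<in>Phi d ` unit_cube d. \<forall>v\<in>Phi d ` unit_cube d.
       \<bar>f (the_inv_into (unit_cube d) (Phi d) u) - f (the_inv_into (unit_cube d) (Phi d) v)\<bar>
         \<le> 2 * sup_norm d f * 3 ^ (k * d) * \<bar>u - v\<bar>)"
proof -
  have d0: "d > 0" using assms(1) by simp
  have cube01: "0 \<le> x p \<and> x p \<le> 1" if "x \<in> unit_cube d" "p \<in> {1..d}" for x p
    using that unfolding unit_cube_def by auto
  have cube0: "x p = 0" if "x \<in> unit_cube d" "p \<notin> {1..d}" for x p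
    using that unfolding unit_cube_def by auto
  define ci where "ci x = (\<lambda>p. if p \<in> {1..d} then nat (T (x p) k) else undefined)" for x :: "nat \<Rightarrow> real"
  have ci_lt: "\<forall>p\<in>{1..d}. ci x p < 2 ^ k" if "x \<in> unit_cube d" for x
  proof
    fix p assume p: "p \<in> {1..d}"
    have "0 \<le> T (x p) k" "T (x p) k < 2 ^ k" using T_dyad cube01[OF that p] by auto
    then have "nat (T (x p) k) < 2 ^ k" by (simp add: nat_less_iff)
    then show "ci x p < 2 ^ k" using p by (simp add: ci_def)
  qed
  have ci_in: "\<forall>p\<in>{1..d}. x p \<in> dyad_int k (ci x p)" if "x \<in> unit_cube d" for x
    using T_dyad cube01[OF that] by (simp add: ci_def)
  have ci_PiE: "ci x \<in> PiE {1..d} (\<lambda>_. {..<2 ^ k})" if "x \<in> unit_cube d" for x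
    using ci_lt[OF that] by (auto simp: ci_def PiE_def extensional_def)
  have "\<forall>l. \<exists>c. (\<forall>p\<in>{1..d}. l p < 2 ^ k) \<longrightarrow>
       (\<forall>x\<in>unit_cube d. (\<forall>p\<in>{1..d}. x p \<in> dyad_int k (l p)) \<longrightarrow> f x = c)"
    using const by blast
  then obtain c where c: "\<forall>l. (\<forall>p\<in>{1..d}. l p < 2 ^ k) \<longrightarrow>
       (\<forall>x\<in>unit_cube d. (\<forall>p\<in>{1..d}. x p \<in> dyad_int k (l p)) \<longrightarrow> f x = c l)"
    using choice[of "\<lambda>l c. (\<forall>p\<in>{1..d}. l p < 2 ^ k) \<longrightarrow>
       (\<forall>x\<in>unit_cube d. (\<forall>p\<in>{1..d}. x p \<in> dyad_int k (l p)) \<longrightarrow> f x = c)"] by blast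
  have fx: "f x = c (ci x)" if "x \<in> unit_cube d" for x
    using c ci_lt[OF that] ci_in[OF that] that by blast
  define L where "L = PiE {1..d} (\<lambda>_. {..<(2::nat) ^ k})"
  have finL: "finite L" unfolding L_def by (intro finite_PiE) auto
  define M where "M = Max ((\<lambda>l. \<bar>c l\<bar>) ` L)"
  have fM: "\<bar>f x\<bar> \<le> M" if "x \<in> unit_cube d" for x
  proof -
    have "ci x \<in> L" using ci_PiE[OF that] by (simp add: L_def)
    then show ?thesis unfolding fx[OF that] M_def using finL by (intro Max_ge) auto
  qed
  have bdd: "bdd_above ((\<lambda>x. \<bar>f x\<bar>) ` unit_cube d)"
    using fM by (intro bdd_aboveI2) auto
  have fle: "\<bar>f x\<bar> \<le> sup_norm d f" if "x \<in> unit_cube d" for x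
    unfolding sup_norm_def by (rule cSUP_upper[OF that bdd])
  have Tdiff_sep: "1 / 3 ^ (k' * d) \<le> \<bar>Phi d x - Phi d y\<bar>"
    if hyp: "x \<in> unit_cube d" "y \<in> unit_cube d" "p \<in> {1..d}" "T (x p) k' \<noteq> T (y p) k'" for x y p k'
  proof -
    obtain j where j: "j \<in> {1..k'}" "bd (x p) j \<noteq> bd (y p) j" using T_diff[OF hyp(4)] by blast
    have s: "1 / 3 ^ (d * (j - 1) + p) \<le> \<bar>Phi d x - Phi d y\<bar>"
      using digit_sep[of d p j x y] d0 hyp(3) j by simp
    have "d * (j - 1) + p \<le> d * (k' - 1) + d" using j(1) hyp(3) by (intro add_mono mult_le_mono2) auto
    also have "\<dots> = k' * d" using j(1) by (cases k') (auto simp: algebra_simps)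
    finally have "1 / (3::real) ^ (k' * d) \<le> 1 / 3 ^ (d * (j - 1) + p)"
      by (intro divide_left_mono power_increasing) auto
    then show ?thesis using s by linarith
  qed
  have inj: "inj_on (Phi d) (unit_cube d)"
  proof (rule inj_onI, rule ccontr)
    fix x y assume x: "x \<in> unit_cube d" and y: "y \<in> unit_cube d" and eq: "Phi d x = Phi d y" and ne: "x \<noteq> y"
    then obtain p where p: "x p \<noteq> y p" by auto
    have pd: "p \<in> {1..d}" using p cube0[OF x] cube0[OF y] by metis
    obtain k' where k': "T (x p) k' \<noteq> T (y p) k'"
      using T_inj cube01[OF x pd] cube01[OF y pd] p by blast
    have "1 / 3 ^ (k' * d) \<le> \<bar>Phi d x - Phi d y\<bar>" by (rule Tdiff_sep[OF x y pd k'])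
    moreover have "(0::real) < 1 / 3 ^ (k' * d)" by simp
    ultimately show False using eq by linarith
  qed
  have lip: "\<bar>f x - f y\<bar> \<le> 2 * sup_norm d f * 3 ^ (k * d) * \<bar>Phi d x - Phi d y\<bar>"
    if x: "x \<in> unit_cube d" and y: "y \<in> unit_cube d" for x y
  proof -
    have S0: "0 \<le> sup_norm d f" using fle[OF x] by linarith
    show ?thesis
    proof (cases "f x = f y")
      case True then show ?thesis using S0 by simp
    next
      case False
      then have "ci x \<noteq> ci y" using fx[OF x] fx[OF y] by metis
      then obtain p where pd: "p \<in> {1..d}" and "nat (T (x p) k) \<noteq> nat (T (y p) k)"
        unfolding ci_def by (meson ext)
      then have "T (x p) k \<noteq> T (y p) k" by metis
      then have b: "1 / 3 ^ (k * d) \<le> \<bar>Phi d x - Phi d y\<bar>" by (rule Tdiff_sep[OF x y pd])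
      have "1 \<le> 3 ^ (k * d) * \<bar>Phi d x - Phi d y\<bar>" using b by (simp add: field_simps)
      then have "2 * sup_norm d f \<le> 2 * sup_norm d f * (3 ^ (k * d) * \<bar>Phi d x - Phi d y\<bar>)"
        using S0 by (simp add: mult_le_cancel_left1)
      moreover have "\<bar>f x - f y\<bar> \<le> 2 * sup_norm d f" using fle[OF x] fle[OF y] by linarith
      ultimately show ?thesis by (simp add: mult.assoc)
    qed
  qed
  show ?thesis
  proof (intro conjI inj ballI)
    fix u v assume "u \<in> Phi d ` unit_cube d" "v \<in> Phi d ` unit_cube d"
    then obtain x y where x: "x \<in> unit_cube d" "u = Phi d x" and y: "y \<in> unit_cube d" "v = Phi d y" by blast
    show "\<bar>f (the_inv_into (unit_cube d) (Phi d) u) - f (the_inv_into (unit_cube d) (Phi d) v)\<bar>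
         \<le> 2 * sup_norm d f * 3 ^ (k * d) * \<bar>u - v\<bar>"
      using lip[OF x(1) y(1)] the_inv_into_f_f[OF inj x(1)] the_inv_into_f_f[OF inj y(1)] x(2) y(2) by simp
  qed
qed


end
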